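(* For $n\ge 1$, the perfect matching complex $\mathcal{M}_p(\mathcal{G}_{2\times n})$ of the $(2\times n)$-grid graph is contractible if $n$ is odd, and is homotopy equivalent to the sphere $\mathbb{S}^k$ if $n$ is even and $n=2k+2$. *)

theory Defs
  imports "HOL-Analysis.Analysis"
begin

definition grid_vertices :: "nat \<Rightarrow> (nat \<times> nat) set" where
  "grid_vertices n = {(i, j). i < 2 \<and> j < n}"

definition grid_adj :: "nat \<times> nat \<Rightarrow> nat \<times> nat \<Rightarrow> bool" where
  "grid_adj u v \<longleftrightarrow>
     (fst u = fst v \<and> (snd u = snd v + 1 \<or> snd v = snd u + 1)) \<or>
     (snd u = snd v \<and> (fst u = fst v + 1 \<or> fst v = fst u + 1))"

definition grid_edges :: "nat \<Rightarrow> (nat \<times> nat) set set" where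
  "grid_edges n = {{u, v} | u v. u \<in> grid_vertices n \<and> v \<in> grid_vertices n \<and> grid_adj u v}"

definition perfect_matching :: "'v set \<Rightarrow> 'v set set \<Rightarrow> 'v set set \<Rightarrow> bool" where
  "perfect_matching V E M \<longleftrightarrow> M \<subseteq> E \<and> (\<forall>v\<in>V. \<exists>!e. e \<in> M \<and> v \<in> e)"

definition perfect_matching_complex :: "'v set \<Rightarrow> 'v set set \<Rightarrow> 'v set set set" where
  "perfect_matching_complex V E = {\<sigma>. \<exists>M. perfect_matching V E M \<and> \<sigma> \<subseteq> M}"

definition geometric_realization :: "'a set \<Rightarrow> 'a set set \<Rightarrow> ('a \<Rightarrow> real) topology" where
  "geometric_realization W K =
     subtopology (powertop_real W)
       {f. (\<forall>w\<in>W. 0 \<le> f w) \<and> (\<Sum>w\<in>W. f w) = 1 \<and> {w\<in>W. f w \<noteq> 0} \<in> K}"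

definition grid_pm_complex_space :: "nat \<Rightarrow> ((nat \<times> nat) set \<Rightarrow> real) topology" where
  "grid_pm_complex_space n =
     geometric_realization (grid_edges n)
       (perfect_matching_complex (grid_vertices n) (grid_edges n))"

end

theory Submission
  imports Defs
begin


abbreviation GR where "GR \<equiv> geometric_realization"

definition supp :: "'a set \<Rightarrow> ('a \<Rightarrow> real) \<Rightarrow> 'a set" where
  "supp W f = {w\<in>W. f w \<noteq> 0}"

lemma topspace_GR:
  "topspace (GR W L) = {f. f \<in> extensional W \<and> (\<forall>w\<in>W. 0 \<le> f w) \<and> sum f W = 1 \<and> supp W f \<in> L}"
  unfolding geometric_realization_def supp_def
  by (auto simp: PiE_def)

lemma cont_GR_coord:
  assumes "w \<in> W" shows "continuous_map (GR W L) euclideanreal (\<lambda>f. f w)"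
  unfolding geometric_realization_def
  by (rule continuous_map_from_subtopology[OF continuous_map_product_projection[OF assms]])

lemma cont_into_GR:
  assumes "\<And>x. x \<in> topspace X \<Longrightarrow> g x \<in> topspace (GR W L)"
    and "\<And>w. w \<in> W \<Longrightarrow> continuous_map X euclideanreal (\<lambda>x. g x w)"
  shows "continuous_map X (GR W L) g"
proof -
  have "g x \<in> extensional W" if "x \<in> topspace X" for x
    using assms(1)[OF that] by (simp add: topspace_GR)
  then show ?thesis
  unfolding geometric_realization_def continuous_map_in_subtopology
  using assms
  by (auto simp: continuous_map_componentwise topspace_GR supp_def geometric_realization_def)
qed

lemma sum_split2:
  assumes "finite W" "a \<in> W" "b \<in> W" "a \<noteq> b"
  shows "sum g W = sum g (W - {a,b}) + g a + g b"
  using assms by (simp add: sum.remove[of W a] sum.remove[of "W-{a}" b] Diff_insert2[symmetric] algebra_simps)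

lemma sum_upd2:
  fixes f :: "'a \<Rightarrow> real"
  assumes "finite W" "a \<in> W" "b \<in> W" "a \<noteq> b"
  shows "sum (f(a := x, b := y)) W = sum f W - f a - f b + x + y"
proof -
  define g where "g = f(a := x, b := y)"
  have 1: "sum g W = sum g (W - {a,b}) + g a + g b" by (rule sum_split2[OF assms])
  have 2: "sum f W = sum f (W - {a,b}) + f a + f b" by (rule sum_split2[OF assms])
  have 3: "sum g (W - {a,b}) = sum f (W - {a,b})" by (rule sum.cong) (auto simp: g_def)
  have "g a = x" "g b = y" using assms by (auto simp: g_def)
  with 1 2 3 have "sum g W = sum f W - f a - f b + x + y" by linarith
  then show ?thesis by (simp only: g_def)
qed

lemma gr_delete:
  assumes fin: "finite W" and aW: "a \<in> W" and bW: "b \<in> W" and ab: "a \<noteq> b"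
    and down: "\<And>\<sigma> \<tau>. \<sigma> \<in> L \<Longrightarrow> \<tau> \<subseteq> \<sigma> \<Longrightarrow> \<tau> \<in> L"
    and dom: "\<And>\<sigma>. \<sigma> \<in> L \<Longrightarrow> b \<in> \<sigma> \<Longrightarrow> insert a \<sigma> \<in> L"
  shows "GR W L homotopy_equivalent_space GR W {\<sigma>\<in>L. b \<notin> \<sigma>}"
proof -
  define h where "h = (\<lambda>(t::real, f::'a\<Rightarrow>real). f(a := f a + t * f b, b := (1 - t) * f b))"
  define r where "r = (\<lambda>f::'a\<Rightarrow>real. f(a := f a + f b, b := 0))"
  have h0: "h (0, f) = f" for f by (simp add: h_def)
  have h1: "h (1, f) = r f" for f by (simp add: h_def r_def)
  have hmem: "h (t, f) \<in> topspace (GR W L)" if f: "f \<in> topspace (GR W L)" and t: "0 \<le> t" "t \<le> 1" for t f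
  proof -
    have fe: "f \<in> extensional W" and fnn: "\<forall>w\<in>W. 0 \<le> f w" and fs: "sum f W = 1"
      and fsupp: "supp W f \<in> L" using f by (auto simp: topspace_GR)
    show ?thesis
    proof (cases "f b = 0")
      case True
      then have "h (t, f) = f" by (auto simp: h_def)
      then show ?thesis using f by simp
    next
      case False
      then have bs: "b \<in> supp W f" using bW by (simp add: supp_def)
      have "supp W (h (t, f)) \<subseteq> insert a (supp W f)"
        by (auto simp: supp_def h_def)
      then have "supp W (h (t, f)) \<in> L" using dom[OF fsupp bs] down by blast
      moreover have "h (t, f) \<in> extensional W" using fe aW bW by (auto simp: h_def extensional_def)
      moreover have "\<forall>w\<in>W. 0 \<le> h (t, f) w" using fnn t aW bW by (auto simp: h_def)
      moreover have "sum (h (t, f)) W = 1"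
      proof -
        have "sum (h (t, f)) W = sum f W - f a - f b + (f a + t * f b) + (1 - t) * f b"
          unfolding h_def by (simp only: case_prod_conv sum_upd2[OF fin aW bW ab])
        then show ?thesis using fs by (simp add: algebra_simps)
      qed
      ultimately show ?thesis by (simp add: topspace_GR)
    qed
  qed
  have rmem: "r f \<in> topspace (GR W {\<sigma>\<in>L. b \<notin> \<sigma>})" if f: "f \<in> topspace (GR W L)" for f
  proof -
    have "h (1, f) \<in> topspace (GR W L)" using hmem[OF f] by simp
    then have "r f \<in> topspace (GR W L)" by (simp add: h1)
    moreover have "b \<notin> supp W (r f)" by (simp add: supp_def r_def)
    ultimately show ?thesis by (simp add: topspace_GR)
  qed
  have contr: "continuous_map (GR W L) (GR W {\<sigma>\<in>L. b \<notin> \<sigma>}) r"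
  proof (rule cont_into_GR)
    fix w assume w: "w \<in> W"
    show "continuous_map (GR W L) euclideanreal (\<lambda>x. r x w)"
      by (cases "w = b"; cases "w = a")
        (auto simp: r_def w aW bW intro!: continuous_intros cont_GR_coord)
  qed (use rmem in auto)
  have contincl: "continuous_map (GR W {\<sigma>\<in>L. b \<notin> \<sigma>}) (GR W L) id"
    by (rule cont_into_GR) (auto simp: topspace_GR intro: cont_GR_coord)
  have conth: "continuous_map (prod_topology (top_of_set {0..1}) (GR W L)) (GR W L) h"
  proof (rule cont_into_GR)
    fix x assume "x \<in> topspace (prod_topology (top_of_set {0..1::real}) (GR W L))"
    then obtain t f where "x = (t, f)" "t \<in> {0..1}" "f \<in> topspace (GR W L)" by auto
    then show "h x \<in> topspace (GR W L)" using hmem by auto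
  next
    fix w assume w: "w \<in> W"
    have c1: "continuous_map (prod_topology (top_of_set {0..1::real}) (GR W L)) euclideanreal (\<lambda>x. fst x)"
      by (metis continuous_map_fst continuous_map_into_fulltopology)
    have c2: "continuous_map (prod_topology (top_of_set {0..1::real}) (GR W L)) euclideanreal (\<lambda>x. snd x v)"
      if "v \<in> W" for v
      using continuous_map_compose[OF continuous_map_snd cont_GR_coord[OF that]] by (simp add: o_def)
    show "continuous_map (prod_topology (top_of_set {0..1}) (GR W L)) euclideanreal (\<lambda>x. h x w)"
      unfolding h_def case_prod_unfold
      by (cases "w = b"; cases "w = a")
        (auto simp: w aW bW intro!: continuous_intros c1 c2)
  qed
  show ?thesis
    unfolding homotopy_equivalent_space_def
  proof (intro exI conjI)
    show "continuous_map (GR W L) (GR W {\<sigma>\<in>L. b \<notin> \<sigma>}) r" by (rule contr)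
    show "continuous_map (GR W {\<sigma>\<in>L. b \<notin> \<sigma>}) (GR W L) id" by (rule contincl)
    show "homotopic_with (\<lambda>x. True) (GR W L) (GR W L) (id \<circ> r) id"
      apply (rule homotopic_with_symD)
      unfolding homotopic_with_def
      apply (rule exI[of _ h])
      using conth by (auto simp: h0 h1)
    show "homotopic_with (\<lambda>x. True) (GR W {\<sigma>\<in>L. b \<notin> \<sigma>}) (GR W {\<sigma>\<in>L. b \<notin> \<sigma>}) (r \<circ> id) id"
    proof (rule homotopic_with_equal)
      show "continuous_map (GR W {\<sigma>\<in>L. b \<notin> \<sigma>}) (GR W {\<sigma>\<in>L. b \<notin> \<sigma>}) (r \<circ> id)"
        using continuous_map_compose[OF contincl contr] .
      fix x assume x: "x \<in> topspace (GR W {\<sigma>\<in>L. b \<notin> \<sigma>})"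
      then have "x b = 0" using bW by (auto simp: topspace_GR supp_def)
      then show "(r \<circ> id) x = id x" by (simp add: r_def fun_upd_idem)
    qed auto
  qed
qed


lemma gr_cone:
  assumes fin: "finite W" and cW: "c \<in> W"
    and down: "\<And>\<sigma> \<tau>. \<sigma> \<in> L \<Longrightarrow> \<tau> \<subseteq> \<sigma> \<Longrightarrow> \<tau> \<in> L"
    and cone: "\<And>\<sigma>. \<sigma> \<in> L \<Longrightarrow> insert c \<sigma> \<in> L"
  shows "contractible_space (GR W L)"
proof -
  define h where "h = (\<lambda>(t::real, f::'a\<Rightarrow>real). restrict (\<lambda>w. (1 - t) * f w + t * (if w = c then 1 else 0)) W)"
  define z where "z = restrict (\<lambda>w. if w = c then 1 else (0::real)) W"
  have hmem: "h (t, f) \<in> topspace (GR W L)" if f: "f \<in> topspace (GR W L)" and t: "0 \<le> t" "t \<le> 1" for t f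
  proof -
    have fe: "f \<in> extensional W" and fnn: "\<forall>w\<in>W. 0 \<le> f w" and fs: "sum f W = 1"
      and fsupp: "supp W f \<in> L" using f by (auto simp: topspace_GR)
    have "supp W (h (t, f)) \<subseteq> insert c (supp W f)"
      by (auto simp: supp_def h_def)
    then have "supp W (h (t, f)) \<in> L" using cone[OF fsupp] down by blast
    moreover have "h (t, f) \<in> extensional W" by (auto simp: h_def)
    moreover have "\<forall>w\<in>W. 0 \<le> h (t, f) w" using fnn t by (auto simp: h_def)
    moreover have "sum (h (t, f)) W = 1"
    proof -
      have "sum (h (t, f)) W = (\<Sum>w\<in>W. (1 - t) * f w + t * (if w = c then 1 else 0))"
        by (rule sum.cong) (auto simp: h_def)
      also have "\<dots> = (1 - t) * sum f W + t"
        using fin cW by (simp add: sum.distrib sum_distrib_left[symmetric] if_distrib[of "(*) t"] cong: if_cong)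
      finally show ?thesis using fs by simp
    qed
    ultimately show ?thesis by (simp add: topspace_GR)
  qed
  have conth: "continuous_map (prod_topology (top_of_set {0..1}) (GR W L)) (GR W L) h"
  proof (rule cont_into_GR)
    fix x assume "x \<in> topspace (prod_topology (top_of_set {0..1::real}) (GR W L))"
    then obtain t f where "x = (t, f)" "t \<in> {0..1}" "f \<in> topspace (GR W L)" by auto
    then show "h x \<in> topspace (GR W L)" using hmem by auto
  next
    fix w assume w: "w \<in> W"
    have c1: "continuous_map (prod_topology (top_of_set {0..1::real}) (GR W L)) euclideanreal (\<lambda>x. fst x)"
      by (metis continuous_map_fst continuous_map_into_fulltopology)
    have c2: "continuous_map (prod_topology (top_of_set {0..1::real}) (GR W L)) euclideanreal (\<lambda>x. snd x v)"
      if "v \<in> W" for v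
      using continuous_map_compose[OF continuous_map_snd cont_GR_coord[OF that]] by (simp add: o_def)
    show "continuous_map (prod_topology (top_of_set {0..1}) (GR W L)) euclideanreal (\<lambda>x. h x w)"
      unfolding h_def case_prod_unfold
      by (auto simp: w cW intro!: continuous_intros c1 c2)
  qed
  have "homotopic_with (\<lambda>x. True) (GR W L) (GR W L) id (\<lambda>x. z)"
    unfolding homotopic_with[where P="\<lambda>x. True", simplified]
  proof (intro exI conjI ballI)
    show "continuous_map (prod_topology (top_of_set {0..1}) (GR W L)) (GR W L) h" by (rule conth)
    fix x assume "x \<in> topspace (GR W L)"
    then have "x \<in> extensional W" by (simp add: topspace_GR)
    then show "h (0, x) = id x" by (auto simp: h_def restrict_def extensional_def)
  next
    fix x show "h (1, x) = z" by (simp add: h_def z_def)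
  qed
  then show ?thesis unfolding contractible_space_def by blast
qed


locale crossdata =
  fixes W :: "'a set" and p q :: "nat \<Rightarrow> 'a" and k :: nat
  assumes finW: "finite W" and pW: "p ` {..k} \<subseteq> W" and qW: "q ` {..k} \<subseteq> W"
    and injp: "inj_on p {..k}" and injq: "inj_on q {..k}"
    and pq: "p ` {..k} \<inter> q ` {..k} = {}"
begin

definition CL where "CL = {\<sigma>. \<sigma> \<subseteq> p ` {..k} \<union> q ` {..k} \<and> (\<forall>i\<le>k. \<not> (p i \<in> \<sigma> \<and> q i \<in> \<sigma>))}"

lemma CL_facts:
  assumes f: "f \<in> topspace (GR W CL)"
  shows "\<And>w. w \<in> W \<Longrightarrow> w \<notin> p ` {..k} \<union> q ` {..k} \<Longrightarrow> f w = 0"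
    and "\<And>i. i \<le> k \<Longrightarrow> f (p i) = 0 \<or> f (q i) = 0"
    and "\<And>i. i \<le> k \<Longrightarrow> 0 \<le> f (p i)" and "\<And>i. i \<le> k \<Longrightarrow> 0 \<le> f (q i)"
    and "(\<Sum>i\<le>k. \<bar>f (p i) - f (q i)\<bar>) = 1"
proof -
  have fnn: "\<forall>w\<in>W. 0 \<le> f w" and fs: "sum f W = 1" and fsupp: "supp W f \<in> CL"
    using f by (auto simp: topspace_GR)
  show z: "f w = 0" if "w \<in> W" "w \<notin> p ` {..k} \<union> q ` {..k}" for w
    using fsupp that by (auto simp: CL_def supp_def)
  show o: "f (p i) = 0 \<or> f (q i) = 0" if "i \<le> k" for i
    using fsupp that pW qW by (auto simp: CL_def supp_def)
  show nnp: "0 \<le> f (p i)" if "i \<le> k" for i using fnn pW that by auto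
  show nnq: "0 \<le> f (q i)" if "i \<le> k" for i using fnn qW that by auto
  have "1 = sum f W" using fs by simp
  also have "\<dots> = sum f (p ` {..k} \<union> q ` {..k})"
    by (rule sum.mono_neutral_right) (use finW pW qW in \<open>auto intro!: z\<close>)
  also have "\<dots> = sum f (p ` {..k}) + sum f (q ` {..k})"
    by (rule sum.union_disjoint) (use pq in auto)
  also have "\<dots> = (\<Sum>i\<le>k. f (p i)) + (\<Sum>i\<le>k. f (q i))"
    by (simp add: sum.reindex injp injq)
  also have "\<dots> = (\<Sum>i\<le>k. \<bar>f (p i) - f (q i)\<bar>)"
    unfolding sum.distrib[symmetric]
    by (rule sum.cong) (use o nnp nnq in fastforce)+
  finally show "(\<Sum>i\<le>k. \<bar>f (p i) - f (q i)\<bar>) = 1" by simp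
qed

lemma sum_sq_pos:
  fixes x :: "nat \<Rightarrow> real"
  assumes "(\<Sum>i\<le>k. \<bar>x i\<bar>) = 1" shows "(\<Sum>i\<le>k. (x i)^2) > 0"
proof -
  obtain i where "i \<le> k" "x i \<noteq> 0"
    using assms by (metis (no_types, lifting) abs_zero sum.neutral zero_neq_one atMost_iff)
  then have "(x i)^2 \<le> (\<Sum>i\<le>k. (x i)^2)"
    by (intro member_le_sum) auto
  moreover have "(x i)^2 > 0" using \<open>x i \<noteq> 0\<close> by simp
  ultimately show ?thesis by linarith
qed

lemma abs_sum_pos:
  fixes x :: "nat \<Rightarrow> real"
  assumes "(\<Sum>i\<le>k. (x i)^2) = 1" shows "(\<Sum>i\<le>k. \<bar>x i\<bar>) > 0"
proof -
  obtain i where "i \<le> k" "x i \<noteq> 0"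
    using assms by (metis (no_types, lifting) sum.neutral zero_neq_one atMost_iff power_zero_numeral)
  then have "\<bar>x i\<bar> \<le> (\<Sum>i\<le>k. \<bar>x i\<bar>)"
    by (intro member_le_sum) auto
  moreover have "\<bar>x i\<bar> > 0" using \<open>x i \<noteq> 0\<close> by simp
  ultimately show ?thesis by linarith
qed


definition phi where
  "phi f = (\<lambda>i. if i \<le> k then (f (p i) - f (q i)) / sqrt (\<Sum>j\<le>k. (f (p j) - f (q j))^2) else 0)"

definition NN where "NN x = (\<Sum>j\<le>k. \<bar>x j\<bar>)"

definition psi where
  "psi x = restrict (\<lambda>w. if w \<in> p ` {..k} then max (x (the_inv_into {..k} p w)) 0 / NN x
      else if w \<in> q ` {..k} then max (- x (the_inv_into {..k} q w)) 0 / NN x else 0) W"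

lemma psi_p: "i \<le> k \<Longrightarrow> psi x (p i) = max (x i) 0 / NN x"
  using pW by (auto simp: psi_def the_inv_into_f_f[OF injp])

lemma psi_q: "i \<le> k \<Longrightarrow> psi x (q i) = max (- x i) 0 / NN x"
  using qW pq by (auto simp: psi_def the_inv_into_f_f[OF injq])

lemma sphere_top: "topspace (nsphere k) = {x. (\<Sum>i\<le>k. x i ^ 2) = 1 \<and> (\<forall>i>k. x i = 0)}"
  by (simp add: nsphere)

lemma phi_mem:
  assumes f: "f \<in> topspace (GR W CL)" shows "phi f \<in> topspace (nsphere k)"
proof -
  define S where "S = (\<Sum>j\<le>k. (f (p j) - f (q j))^2)"
  have "S > 0" unfolding S_def by (rule sum_sq_pos[OF CL_facts(5)[OF f]])
  have "(\<Sum>i\<le>k. phi f i ^ 2) = (\<Sum>i\<le>k. (f (p i) - f (q i))^2 / S)"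
    by (rule sum.cong) (auto simp: phi_def S_def[symmetric] power_divide \<open>S > 0\<close> less_imp_le)
  also have "\<dots> = S / S" by (simp add: sum_divide_distrib[symmetric] S_def)
  also have "\<dots> = 1" using \<open>S > 0\<close> by simp
  finally show ?thesis by (simp add: sphere_top phi_def)
qed

lemma psi_mem:
  assumes x: "x \<in> topspace (nsphere k)" shows "psi x \<in> topspace (GR W CL)"
proof -
  have xs: "(\<Sum>i\<le>k. x i ^ 2) = 1" using x by (simp add: sphere_top)
  have N: "NN x > 0" unfolding NN_def by (rule abs_sum_pos[OF xs])
  have z: "psi x w = 0" if "w \<in> W" "w \<notin> p ` {..k} \<union> q ` {..k}" for w
    using that by (simp add: psi_def restrict_def)
  have "psi x \<in> extensional W" by (simp add: psi_def)
  moreover have "\<forall>w\<in>W. 0 \<le> psi x w" using N by (auto simp: psi_def)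
  moreover have "sum (psi x) W = 1"
  proof -
    have "sum (psi x) W = sum (psi x) (p ` {..k} \<union> q ` {..k})"
      by (rule sum.mono_neutral_right) (use finW pW qW in \<open>auto intro!: z\<close>)
    also have "\<dots> = sum (psi x) (p ` {..k}) + sum (psi x) (q ` {..k})"
      by (rule sum.union_disjoint) (use pq in auto)
    also have "\<dots> = (\<Sum>i\<le>k. max (x i) 0 / NN x) + (\<Sum>i\<le>k. max (- x i) 0 / NN x)"
      by (simp add: sum.reindex injp injq psi_p psi_q)
    also have "\<dots> = (\<Sum>i\<le>k. max (x i) 0 + max (- x i) 0) / NN x"
      by (simp add: sum.distrib add_divide_distrib sum_divide_distrib)
    also have "\<dots> = (\<Sum>i\<le>k. \<bar>x i\<bar>) / NN x"
      by (rule arg_cong[where f="\<lambda>t. t / NN x"], rule sum.cong) auto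
    also have "\<dots> = 1" using N by (simp add: NN_def)
    finally show ?thesis .
  qed
  moreover have "supp W (psi x) \<in> CL"
  proof -
    have "supp W (psi x) \<subseteq> p ` {..k} \<union> q ` {..k}" using z by (force simp: supp_def)
    moreover have "\<not> (p i \<in> supp W (psi x) \<and> q i \<in> supp W (psi x))" if "i \<le> k" for i
      using that by (auto simp: supp_def psi_p psi_q)
    ultimately show ?thesis by (simp add: CL_def)
  qed
  ultimately show ?thesis by (simp add: topspace_GR)
qed

lemma psi_phi:
  assumes f: "f \<in> topspace (GR W CL)" shows "psi (phi f) = f"
proof -
  define S where "S = (\<Sum>j\<le>k. (f (p j) - f (q j))^2)"
  have "S > 0" unfolding S_def by (rule sum_sq_pos[OF CL_facts(5)[OF f]])
  have NN: "NN (phi f) = 1 / sqrt S"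
  proof -
    have "NN (phi f) = (\<Sum>i\<le>k. \<bar>f (p i) - f (q i)\<bar> / sqrt S)"
      unfolding NN_def using \<open>S > 0\<close> by (intro sum.cong) (auto simp: phi_def S_def[symmetric])
    also have "\<dots> = 1 / sqrt S"
      using \<open>S > 0\<close> by (simp add: sum_divide_distrib[symmetric] CL_facts(5)[OF f] less_imp_le)
    finally show ?thesis .
  qed
  have fe: "f \<in> extensional W" using f by (simp add: topspace_GR)
  show ?thesis
  proof (rule ext)
    fix w
    show "psi (phi f) w = f w"
    proof (cases "w \<in> W")
      case False
      then show ?thesis using fe by (simp add: psi_def extensional_def)
    next
      case wW: True
      show ?thesis
      proof (cases "w \<in> p ` {..k}")
        case True
        then obtain i where i: "i \<le> k" "w = p i" by auto
        have "psi (phi f) w = max (phi f i) 0 / NN (phi f)" using i by (simp add: psi_p)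
        also have "\<dots> = max ((f (p i) - f (q i)) / sqrt S) 0 * sqrt S"
          unfolding NN using i by (simp add: phi_def S_def[symmetric])
        also have "\<dots> = max (f (p i) - f (q i)) 0"
          using \<open>S > 0\<close> by (auto simp: max_def field_simps)
        finally have "psi (phi f) w = max (f (p i) - f (q i)) 0" .
        then show ?thesis using CL_facts(2,3,4)[OF f i(1)] i by auto
      next
        case np: False
        show ?thesis
        proof (cases "w \<in> q ` {..k}")
          case True
          then obtain i where i: "i \<le> k" "w = q i" by auto
          have "psi (phi f) w = max (- phi f i) 0 / NN (phi f)" using i by (simp add: psi_q)
          also have "\<dots> = max (- ((f (p i) - f (q i)) / sqrt S)) 0 * sqrt S"
            unfolding NN using i by (simp add: phi_def S_def[symmetric])
          also have "\<dots> = max (- (f (p i) - f (q i))) 0"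
            using \<open>S > 0\<close> by (auto simp: max_def field_simps)
          finally have "psi (phi f) w = max (- (f (p i) - f (q i))) 0" .
          then show ?thesis using CL_facts(2,3,4)[OF f i(1)] i by auto
        next
          case False
          then show ?thesis using np wW CL_facts(1)[OF f wW] by (simp add: psi_def)
        qed
      qed
    qed
  qed
qed

lemma phi_psi:
  assumes x: "x \<in> topspace (nsphere k)" shows "phi (psi x) = x"
proof -
  have xs: "(\<Sum>i\<le>k. x i ^ 2) = 1" and xz: "\<forall>i>k. x i = 0" using x by (auto simp: sphere_top)
  have N: "NN x > 0" unfolding NN_def by (rule abs_sum_pos[OF xs])
  have d: "psi x (p i) - psi x (q i) = x i / NN x" if "i \<le> k" for i
    using that by (simp add: psi_p psi_q diff_divide_distrib[symmetric] max_def)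
  have S: "(\<Sum>j\<le>k. (psi x (p j) - psi x (q j))^2) = 1 / (NN x)^2"
  proof -
    have "(\<Sum>j\<le>k. (psi x (p j) - psi x (q j))^2) = (\<Sum>j\<le>k. (x j)^2 / (NN x)^2)"
      by (rule sum.cong) (auto simp: d power_divide)
    also have "\<dots> = 1 / (NN x)^2" by (simp add: sum_divide_distrib[symmetric] xs)
    finally show ?thesis .
  qed
  show ?thesis
  proof (rule ext)
    fix i show "phi (psi x) i = x i"
    proof (cases "i \<le> k")
      case True
      have sq: "sqrt (\<Sum>j\<le>k. (x j / NN x)^2) = 1 / NN x"
        using N by (simp add: power_divide sum_divide_distrib[symmetric] xs real_sqrt_divide)
      then show ?thesis using N True by (simp add: phi_def d)
    next
      case False then show ?thesis using xz by (simp add: phi_def)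
    qed
  qed
qed

lemma cross_homeo: "GR W CL homeomorphic_space nsphere k"
  unfolding homeomorphic_space_def homeomorphic_maps_def
proof (intro exI conjI ballI)
  show "continuous_map (GR W CL) (nsphere k) phi"
    unfolding nsphere continuous_map_in_subtopology
  proof
    show "phi \<in> topspace (GR W CL) \<rightarrow> {x. (\<Sum>i\<le>k. (x i)\<^sup>2) = 1 \<and> (\<forall>i>k. x i = 0)}"
      using phi_mem by (auto simp: sphere_top)
    show "continuous_map (GR W CL) (powertop_real UNIV) phi"
      unfolding continuous_map_componentwise_UNIV
    proof
      fix i
      show "continuous_map (GR W CL) euclideanreal (\<lambda>x. phi x i)"
      proof (cases "i \<le> k")
        case True
        have pp: "\<And>j. j \<le> k \<Longrightarrow> p j \<in> W" "\<And>j. j \<le> k \<Longrightarrow> q j \<in> W" using pW qW by auto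
        show ?thesis
          unfolding phi_def using True
          by (auto intro!: continuous_intros cont_GR_coord pp
              dest!: sum_sq_pos[OF CL_facts(5)])
      next
        case False then show ?thesis by (simp add: phi_def)
      qed
    qed
  qed
  show "continuous_map (nsphere k) (GR W CL) psi"
  proof (rule cont_into_GR)
    show "psi x \<in> topspace (GR W CL)" if "x \<in> topspace (nsphere k)" for x using psi_mem that .
    fix w assume w: "w \<in> W"
    have NNc: "continuous_map (nsphere k) euclideanreal NN"
      unfolding NN_def by (intro continuous_intros continuous_map_nsphere_projection) auto
    have NNnz: "NN x \<noteq> 0" if "x \<in> topspace (nsphere k)" for x
      using abs_sum_pos[of x] that by (auto simp: sphere_top NN_def)
    show "continuous_map (nsphere k) euclideanreal (\<lambda>x. psi x w)"
      unfolding psi_def using w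
      by (auto intro!: continuous_intros continuous_map_nsphere_projection NNc NNnz)
  qed
qed (auto simp: psi_phi phi_psi)

end



definition vE :: "nat \<Rightarrow> (nat \<times> nat) set" where "vE j = {(0,j),(1,j)}"
definition tE :: "nat \<Rightarrow> (nat \<times> nat) set" where "tE j = {(0,j),(0,Suc j)}"
definition bE :: "nat \<Rightarrow> (nat \<times> nat) set" where "bE j = {(1,j),(1,Suc j)}"

lemma E_eqs[simp]:
  "vE i = vE j \<longleftrightarrow> i = j" "tE i = tE j \<longleftrightarrow> i = j" "bE i = bE j \<longleftrightarrow> i = j"
  "vE i \<noteq> tE j" "vE i \<noteq> bE j" "tE i \<noteq> bE j" "tE j \<noteq> vE i" "bE j \<noteq> vE i" "bE j \<noteq> tE i"
  by (auto simp: vE_def tE_def bE_def doubleton_eq_iff)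

lemma E_mem[simp]:
  "x \<in> vE j \<longleftrightarrow> x = (0,j) \<or> x = (1,j)"
  "x \<in> tE j \<longleftrightarrow> x = (0,j) \<or> x = (0,Suc j)"
  "x \<in> bE j \<longleftrightarrow> x = (1,j) \<or> x = (1,Suc j)"
  by (auto simp: vE_def tE_def bE_def)

lemma mk_edge: "u \<in> grid_vertices n \<Longrightarrow> v \<in> grid_vertices n \<Longrightarrow> grid_adj u v \<Longrightarrow> {u,v} \<in> grid_edges n"
  unfolding grid_edges_def by blast

lemma edge_cases:
  "e \<in> grid_edges n \<longleftrightarrow> (\<exists>j<n. e = vE j) \<or> (\<exists>j. Suc j < n \<and> (e = tE j \<or> e = bE j))"
proof
  assume "e \<in> grid_edges n"
  then obtain u v where uv: "e = {u,v}" "u \<in> grid_vertices n" "v \<in> grid_vertices n" "grid_adj u v"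
    unfolding grid_edges_def by blast
  obtain a b where u: "u = (a,b)" by (cases u)
  obtain c d where v: "v = (c,d)" by (cases v)
  have e: "e = {(a,b),(c,d)}" "a < 2" "b < n" "c < 2" "d < n"
    using uv unfolding u v grid_vertices_def by auto
  have adj: "(a = c \<and> (b = d + 1 \<or> d = b + 1)) \<or> (b = d \<and> (a = c + 1 \<or> c = a + 1))"
    using uv(4) unfolding u v grid_adj_def by simp
  have a: "a = 0 \<or> a = 1" and c: "c = 0 \<or> c = 1" using e by auto
  from adj show "(\<exists>j<n. e = vE j) \<or> (\<exists>j. Suc j < n \<and> (e = tE j \<or> e = bE j))"
  proof (elim disjE conjE)
    assume "a = c" "b = d + 1"
    then have "e = tE d \<or> e = bE d" using a e(1) by (auto simp: tE_def bE_def insert_commute)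
    then show ?thesis using \<open>b = d + 1\<close> e(3) by auto
  next
    assume "a = c" "d = b + 1"
    then have "e = tE b \<or> e = bE b" using a e(1) by (auto simp: tE_def bE_def insert_commute)
    then show ?thesis using \<open>d = b + 1\<close> e(5) by auto
  next
    assume "b = d" "a = c + 1"
    then have "e = vE b" using c e(1,2) by (auto simp: vE_def insert_commute)
    then show ?thesis using e(3) by auto
  next
    assume "b = d" "c = a + 1"
    then have "e = vE b" using a e(1,4) by (auto simp: vE_def insert_commute)
    then show ?thesis using e(3) by auto
  qed
next
  assume "(\<exists>j<n. e = vE j) \<or> (\<exists>j. Suc j < n \<and> (e = tE j \<or> e = bE j))"
  then show "e \<in> grid_edges n"
  proof (elim disjE exE conjE)
    fix j assume "j < n" "e = vE j"
    then show ?thesis using mk_edge[of "(0,j)" n "(1,j)"]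
      by (simp add: vE_def grid_vertices_def grid_adj_def)
  next
    fix j assume "Suc j < n" "e = tE j"
    then show ?thesis using mk_edge[of "(0,j)" n "(0,Suc j)"]
      by (simp add: tE_def grid_vertices_def grid_adj_def)
  next
    fix j assume "Suc j < n" "e = bE j"
    then show ?thesis using mk_edge[of "(1,j)" n "(1,Suc j)"]
      by (simp add: bE_def grid_vertices_def grid_adj_def)
  qed
qed


lemma gv_mem[simp]: "(r,c) \<in> grid_vertices n \<longleftrightarrow> r < 2 \<and> c < n"
  by (simp add: grid_vertices_def)

lemma edges_at0:
  assumes "e \<in> grid_edges n" "(0,c) \<in> e"
  shows "e = vE c \<or> e = tE c \<or> (c > 0 \<and> e = tE (c - 1))"
  using assms unfolding edge_cases by auto

lemma edges_at1:
  assumes "e \<in> grid_edges n" "(1,c) \<in> e"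
  shows "e = vE c \<or> e = bE c \<or> (c > 0 \<and> e = bE (c - 1))"
  using assms unfolding edge_cases by auto

lemma edge_valid:
  "vE c \<in> grid_edges n \<longleftrightarrow> c < n" "tE c \<in> grid_edges n \<longleftrightarrow> Suc c < n" "bE c \<in> grid_edges n \<longleftrightarrow> Suc c < n"
  unfolding edge_cases by auto

lemma pm_unique:
  assumes "perfect_matching V E M" "e \<in> M" "e' \<in> M" "x \<in> e" "x \<in> e'" "x \<in> V"
  shows "e = e'"
  using assms unfolding perfect_matching_def by blast

abbreviation "PMn n M \<equiv> perfect_matching (grid_vertices n) (grid_edges n) M"

lemma pm_cover:
  assumes "PMn n M" "x \<in> grid_vertices n" obtains e where "e \<in> M" "x \<in> e"
  using assms unfolding perfect_matching_def by blast

lemma pm_sub: "PMn n M \<Longrightarrow> e \<in> M \<Longrightarrow> e \<in> grid_edges n"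
  unfolding perfect_matching_def by blast

lemma cut_lemma:
  assumes M: "PMn n M"
  shows "Suc j < n \<Longrightarrow> tE j \<in> M \<longleftrightarrow> bE j \<in> M"
proof (induction j)
  have main: "tE j \<in> M \<longleftrightarrow> bE j \<in> M"
    if j: "Suc j < n" and left: "j = 0 \<or> (tE (j - 1) \<notin> M \<and> bE (j - 1) \<notin> M)" for j
  proof -
    obtain e where e: "e \<in> M" "(0,j) \<in> e" using pm_cover[OF M, of "(0,j)"] j by auto
    have eE: "e \<in> grid_edges n" using pm_sub[OF M e(1)] .
    have "e = vE j \<or> e = tE j" using edges_at0[OF eE e(2)] left e(1) by auto
    then show ?thesis
    proof
      assume ev: "e = vE j"
      have "tE j \<notin> M" using pm_unique[OF M e(1), of "tE j" "(0,j)"] ev e j by auto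
      moreover have "bE j \<notin> M" using pm_unique[OF M e(1), of "bE j" "(1,j)"] ev e j by auto
      ultimately show ?thesis by simp
    next
      assume et: "e = tE j"
      have nv: "vE j \<notin> M" using pm_unique[OF M e(1), of "vE j" "(0,j)"] et e j by auto
      obtain e' where e': "e' \<in> M" "(1,j) \<in> e'" using pm_cover[OF M, of "(1,j)"] j by auto
      have "e' = bE j" using edges_at1[OF pm_sub[OF M e'(1)] e'(2)] left nv e'(1) by auto
      then show ?thesis using e et e' by auto
    qed
  qed
  {
    case 0
    then show ?case using main[of 0] by simp
  next
    case (Suc i)
    show ?case
    proof (cases "tE i \<in> M")
      case True
      then have bi: "bE i \<in> M" using Suc by simp
      have "tE (Suc i) \<notin> M" using pm_unique[OF M True, of "tE (Suc i)" "(0,Suc i)"] Suc.prems by auto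
      moreover have "bE (Suc i) \<notin> M" using pm_unique[OF M bi, of "bE (Suc i)" "(1,Suc i)"] Suc.prems by auto
      ultimately show ?thesis by simp
    next
      case False
      then have "bE i \<notin> M" using Suc by simp
      then show ?thesis using main[of "Suc i"] False Suc.prems by simp
    qed
  }
qed


definition pdisj :: "'a set set \<Rightarrow> bool" where
  "pdisj \<sigma> \<longleftrightarrow> (\<forall>e\<in>\<sigma>. \<forall>e'\<in>\<sigma>. e \<noteq> e' \<longrightarrow> e \<inter> e' = {})"

lemma pdisjD: "pdisj \<sigma> \<Longrightarrow> e \<in> \<sigma> \<Longrightarrow> e' \<in> \<sigma> \<Longrightarrow> x \<in> e \<Longrightarrow> x \<in> e' \<Longrightarrow> e = e'"
  unfolding pdisj_def by blast

lemma edge_sub: "e \<in> grid_edges n \<Longrightarrow> e \<subseteq> grid_vertices n"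
  unfolding edge_cases by auto

abbreviation "Kn n \<equiv> perfect_matching_complex (grid_vertices n) (grid_edges n)"

lemma K_imp:
  assumes "\<sigma> \<in> Kn n" shows "\<sigma> \<subseteq> grid_edges n" "pdisj \<sigma>"
proof -
  obtain M where M: "PMn n M" "\<sigma> \<subseteq> M" using assms by (auto simp: perfect_matching_complex_def)
  show "\<sigma> \<subseteq> grid_edges n" using M pm_sub by blast
  show "pdisj \<sigma>" unfolding pdisj_def
  proof (intro ballI impI)
    fix e e' assume e: "e \<in> \<sigma>" "e' \<in> \<sigma>" "e \<noteq> e'"
    show "e \<inter> e' = {}"
    proof (rule ccontr)
      assume "e \<inter> e' \<noteq> {}"
      then obtain x where "x \<in> e" "x \<in> e'" by auto
      moreover have "x \<in> grid_vertices n" using edge_sub pm_sub[OF M(1)] M(2) e(1) \<open>x \<in> e\<close> by blast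
      ultimately show False using pm_unique[OF M(1)] M(2) e by blast
    qed
  qed
qed

lemma K_down: "\<sigma> \<in> Kn n \<Longrightarrow> \<tau> \<subseteq> \<sigma> \<Longrightarrow> \<tau> \<in> Kn n"
  unfolding perfect_matching_complex_def by blast

lemma extend:
  assumes sub: "\<sigma> \<subseteq> grid_edges n" and not: "\<And>j. tE j \<notin> \<sigma>" and pd: "pdisj \<sigma>"
  shows "\<sigma> \<in> Kn n"
proof -
  define M where "M = \<sigma> \<union> {tE j | j. bE j \<in> \<sigma>} \<union> {vE c | c. c < n \<and> bE c \<notin> \<sigma> \<and> (c > 0 \<longrightarrow> bE (c - 1) \<notin> \<sigma>)}"
  have c1: "\<not> (bE c \<in> \<sigma> \<and> bE (c - 1) \<in> \<sigma>)" if "c > 0" for c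
    using pdisjD[OF pd, of "bE c" "bE (c - 1)" "(1,c)"] that by auto
  have c2: "\<not> (vE c \<in> \<sigma> \<and> bE c \<in> \<sigma>)" for c
    using pdisjD[OF pd, of "vE c" "bE c" "(1,c)"] by auto
  have c3: "\<not> (vE c \<in> \<sigma> \<and> bE (c - 1) \<in> \<sigma>)" if "c > 0" for c
    using pdisjD[OF pd, of "vE c" "bE (c - 1)" "(1,c)"] that by auto
  have sig: "\<And>e. e \<in> \<sigma> \<Longrightarrow> (\<exists>j<n. e = vE j) \<or> (\<exists>j. Suc j < n \<and> e = bE j)"
  proof -
    fix e assume "e \<in> \<sigma>"
    then have "e \<in> grid_edges n" "\<forall>j. e \<noteq> tE j" using sub not by blast+
    then show "(\<exists>j<n. e = vE j) \<or> (\<exists>j. Suc j < n \<and> e = bE j)" unfolding edge_cases by blast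
  qed
  have "PMn n M"
    unfolding perfect_matching_def
  proof (intro conjI ballI)
    show "M \<subseteq> grid_edges n"
      using sub unfolding M_def by (auto simp: edge_valid dest!: sig)
    fix x assume "x \<in> grid_vertices n"
    then obtain r c where x: "x = (r,c)" "r < 2" "c < n" by (cases x) auto
    define E0 where "E0 = (if bE c \<in> \<sigma> then (if r = 0 then tE c else bE c)
       else if c > 0 \<and> bE (c - 1) \<in> \<sigma> then (if r = 0 then tE (c - 1) else bE (c - 1)) else vE c)"
    have r: "r = 0 \<or> r = 1" using x by auto
    have E0M: "E0 \<in> M" unfolding E0_def M_def using x by auto
    have xE0: "x \<in> E0" unfolding E0_def using x r by auto
    have uniq: "e = E0" if eM: "e \<in> M" and xe: "x \<in> e" for e
    proof -
      consider (s) "e \<in> \<sigma>" | (t) j where "e = tE j" "bE j \<in> \<sigma>"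
        | (v) c' where "e = vE c'" "bE c' \<notin> \<sigma>" "c' > 0 \<longrightarrow> bE (c' - 1) \<notin> \<sigma>"
        using eM unfolding M_def by blast
      then show ?thesis
      proof cases
        case s
        then consider (sv) j where "e = vE j" | (sb) j where "e = bE j" using sig by blast
        then show ?thesis
        proof cases
          case sv
          then have "j = c" using xe x by auto
          then show ?thesis using c2[of c] c3[of c] s sv unfolding E0_def by auto
        next
          case sb
          then have "r = 1" "j = c \<or> Suc j = c" using xe x by auto
          then show ?thesis using c1[of c] s sb unfolding E0_def by auto
        qed
      next
        case t
        then have "r = 0" "j = c \<or> Suc j = c" using xe x by auto
        then show ?thesis using c1[of c] t unfolding E0_def by auto
      next
        case v
        then have "c' = c" using xe x by auto
        then show ?thesis using v unfolding E0_def by auto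
      qed
    qed
    show "\<exists>!e. e \<in> M \<and> x \<in> e" using E0M xE0 uniq by blast
  qed
  then show ?thesis unfolding perfect_matching_complex_def M_def by blast
qed




lemma fin_edges: "finite (grid_edges n)"
proof -
  have "grid_vertices n \<subseteq> {..<2} \<times> {..<n}" by (auto simp: grid_vertices_def)
  then have "finite (grid_vertices n)" by (rule finite_subset) auto
  then show ?thesis using edge_sub by (meson PowI finite_Pow_iff finite_subset subsetI)
qed

definition KD :: "nat \<Rightarrow> (nat \<times> nat) set set \<Rightarrow> (nat \<times> nat) set set set" where
  "KD n D = {\<sigma> \<in> Kn n. \<sigma> \<inter> D = {}}"

lemma KD_down: "\<sigma> \<in> KD n D \<Longrightarrow> \<tau> \<subseteq> \<sigma> \<Longrightarrow> \<tau> \<in> KD n D"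
  unfolding KD_def using K_down by blast

lemma KD_del: "{\<sigma> \<in> KD n D. b \<notin> \<sigma>} = KD n (insert b D)"
  unfolding KD_def by auto

lemma KD_empty: "KD n {} = Kn n" unfolding KD_def by auto

lemma KD_char:
  assumes "\<And>j. Suc j < n \<Longrightarrow> tE j \<in> D"
  shows "\<sigma> \<in> KD n D \<longleftrightarrow> \<sigma> \<subseteq> grid_edges n \<and> pdisj \<sigma> \<and> \<sigma> \<inter> D = {}"
proof
  assume "\<sigma> \<in> KD n D" then show "\<sigma> \<subseteq> grid_edges n \<and> pdisj \<sigma> \<and> \<sigma> \<inter> D = {}"
    unfolding KD_def using K_imp by blast
next
  assume h: "\<sigma> \<subseteq> grid_edges n \<and> pdisj \<sigma> \<and> \<sigma> \<inter> D = {}"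
  have "tE j \<notin> \<sigma>" for j
  proof
    assume "tE j \<in> \<sigma>"
    then have "Suc j < n" using h edge_valid by blast
    then show False using assms h \<open>tE j \<in> \<sigma>\<close> by blast
  qed
  then show "\<sigma> \<in> KD n D" unfolding KD_def using extend h by blast
qed

lemma pdisj_insert:
  "pdisj \<sigma> \<Longrightarrow> (\<And>e. e \<in> \<sigma> \<Longrightarrow> e \<noteq> a \<Longrightarrow> e \<inter> a = {}) \<Longrightarrow> pdisj (insert a \<sigma>)"
  unfolding pdisj_def by blast

lemma meets_v:
  assumes "e \<in> grid_edges n" "e \<inter> vE c \<noteq> {}"
  shows "e = vE c \<or> e = tE c \<or> e = bE c \<or> (c > 0 \<and> (e = tE (c - 1) \<or> e = bE (c - 1)))"
proof -
  obtain x where "x \<in> e" "x \<in> vE c" using assms(2) by blast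
  then have "(0,c) \<in> e \<or> (1,c) \<in> e" by auto
  then show ?thesis using edges_at0[OF assms(1)] edges_at1[OF assms(1)] by blast
qed

lemma inj_E: "inj vE" "inj tE" "inj bE" by (auto intro: injI)

lemma img_E[simp]:
  "vE j \<in> vE ` S \<longleftrightarrow> j \<in> S" "tE j \<in> tE ` S \<longleftrightarrow> j \<in> S" "bE j \<in> bE ` S \<longleftrightarrow> j \<in> S"
  "vE j \<notin> tE ` S" "vE j \<notin> bE ` S" "tE j \<notin> vE ` S" "tE j \<notin> bE ` S" "bE j \<notin> vE ` S" "bE j \<notin> tE ` S"
  by (auto simp: inj_image_mem_iff[OF inj_E(1)] inj_image_mem_iff[OF inj_E(2)] inj_image_mem_iff[OF inj_E(3)])

abbreviation "GK n L \<equiv> GR (grid_edges n) L"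

definition Tm :: "nat \<Rightarrow> (nat \<times> nat) set set" where "Tm m = tE ` {..<m}"

lemma phase1: "m < n \<Longrightarrow> GK n (Kn n) homotopy_equivalent_space GK n (KD n (Tm m))"
proof (induction m)
  case 0
  then show ?case by (simp add: Tm_def KD_empty homotopy_equivalent_space_refl)
next
  case (Suc m)
  have A: "GK n (KD n (Tm m)) homotopy_equivalent_space GK n {\<sigma> \<in> KD n (Tm m). tE m \<notin> \<sigma>}"
  proof (rule gr_delete[where a = "bE m"])
    show "finite (grid_edges n)" by (rule fin_edges)
    show "bE m \<in> grid_edges n" "tE m \<in> grid_edges n" using Suc.prems by (auto simp: edge_valid)
    show "bE m \<noteq> tE m" by simp
    show "\<And>\<sigma> \<tau>. \<sigma> \<in> KD n (Tm m) \<Longrightarrow> \<tau> \<subseteq> \<sigma> \<Longrightarrow> \<tau> \<in> KD n (Tm m)" by (rule KD_down)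
    fix \<sigma> assume s: "\<sigma> \<in> KD n (Tm m)" "tE m \<in> \<sigma>"
    then obtain M where M: "PMn n M" "\<sigma> \<subseteq> M" "\<sigma> \<inter> Tm m = {}"
      by (auto simp: KD_def perfect_matching_complex_def)
    then have "bE m \<in> M" using cut_lemma[OF M(1)] Suc.prems s by auto
    then show "insert (bE m) \<sigma> \<in> KD n (Tm m)"
      using M by (auto simp: KD_def perfect_matching_complex_def Tm_def)
  qed
  have B: "{\<sigma> \<in> KD n (Tm m). tE m \<notin> \<sigma>} = KD n (Tm (Suc m))"
    by (simp add: KD_del Tm_def lessThan_Suc)
  have IH: "GK n (Kn n) homotopy_equivalent_space GK n (KD n (Tm m))" using Suc.IH Suc.prems by simp
  show ?case using homotopy_eqv_trans[OF IH A] unfolding B .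
qed


lemma Tm_mem[simp]: "tE j \<in> Tm m \<longleftrightarrow> j < m" "vE j \<notin> Tm m" "bE j \<notin> Tm m"
  by (auto simp: Tm_def)

lemma insert_v:
  assumes s: "\<sigma> \<in> KD n D" and T: "\<And>j. Suc j < n \<Longrightarrow> tE j \<in> D"
    and vD: "vE c \<notin> D" and c: "c < n" and b1: "bE c \<notin> \<sigma>" and b2: "c > 0 \<Longrightarrow> bE (c - 1) \<notin> \<sigma>"
  shows "insert (vE c) \<sigma> \<in> KD n D"
proof -
  have h: "\<sigma> \<subseteq> grid_edges n" "pdisj \<sigma>" "\<sigma> \<inter> D = {}" using s KD_char[OF T] by auto
  have "pdisj (insert (vE c) \<sigma>)"
  proof (rule pdisj_insert[OF h(2)])
    fix e assume e: "e \<in> \<sigma>" "e \<noteq> vE c"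
    show "e \<inter> vE c = {}"
    proof (rule ccontr)
      assume "e \<inter> vE c \<noteq> {}"
      moreover have eE: "e \<in> grid_edges n" using e h by auto
      ultimately have "e = tE c \<or> e = bE c \<or> (c > 0 \<and> (e = tE (c - 1) \<or> e = bE (c - 1)))"
        using meets_v e(2) by blast
      moreover have "e \<notin> D" using e h by auto
      ultimately show False using T eE e(1) b1 b2 by (auto simp: edge_valid)
    qed
  qed
  then show ?thesis using KD_char[OF T] h vD c by (auto simp: edge_valid)
qed

definition D2 :: "nat \<Rightarrow> nat \<Rightarrow> (nat \<times> nat) set set" where
  "D2 n m = Tm (n - 1) \<union> bE ` {2 * i + 1 | i. i < m}"

lemma D2_T: "Suc j < n \<Longrightarrow> tE j \<in> D2 n m" by (auto simp: D2_def)

lemma D2_v: "vE c \<notin> D2 n m" by (auto simp: D2_def)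

lemma phase2: "2 * m \<le> n - 1 \<Longrightarrow> GK n (KD n (D2 n 0)) homotopy_equivalent_space GK n (KD n (D2 n m))"
proof (induction m)
  case 0
  then show ?case by (simp add: homotopy_equivalent_space_refl)
next
  case (Suc m)
  have lt: "2 * m + 2 < n" using Suc.prems by simp
  have A: "GK n (KD n (D2 n m)) homotopy_equivalent_space GK n {\<sigma> \<in> KD n (D2 n m). bE (2*m+1) \<notin> \<sigma>}"
  proof (rule gr_delete[where a = "vE (2*m)"])
    show "finite (grid_edges n)" by (rule fin_edges)
    show "vE (2*m) \<in> grid_edges n" "bE (2*m+1) \<in> grid_edges n" using lt by (auto simp: edge_valid)
    show "vE (2*m) \<noteq> bE (2*m+1)" by simp
    show "\<And>\<sigma> \<tau>. \<sigma> \<in> KD n (D2 n m) \<Longrightarrow> \<tau> \<subseteq> \<sigma> \<Longrightarrow> \<tau> \<in> KD n (D2 n m)" by (rule KD_down)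
    fix \<sigma> assume s: "\<sigma> \<in> KD n (D2 n m)" "bE (2*m+1) \<in> \<sigma>"
    have pd: "pdisj \<sigma>" and sD: "\<sigma> \<inter> D2 n m = {}" using s(1) by (auto simp: KD_def dest: K_imp)
    show "insert (vE (2*m)) \<sigma> \<in> KD n (D2 n m)"
    proof (rule insert_v[OF s(1) D2_T D2_v])
      show "2 * m < n" using lt by simp
      show "bE (2 * m) \<notin> \<sigma>" using pdisjD[OF pd _ s(2), of "bE (2*m)" "(1, 2*m+1)"] by auto
      assume "2 * m > 0"
      then have "bE (2 * m - 1) \<in> D2 n m" unfolding D2_def
        by (intro UnI2 imageI) (auto intro!: exI[of _ "m - 1"])
      then show "bE (2 * m - 1) \<notin> \<sigma>" using sD by auto
    qed
  qed
  have B: "{\<sigma> \<in> KD n (D2 n m). bE (2*m+1) \<notin> \<sigma>} = KD n (D2 n (Suc m))"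
  proof -
    have "D2 n (Suc m) = insert (bE (2*m+1)) (D2 n m)"
      unfolding D2_def by (auto simp: less_Suc_eq)
    then show ?thesis by (simp add: KD_del)
  qed
  have IH: "GK n (KD n (D2 n 0)) homotopy_equivalent_space GK n (KD n (D2 n m))" using Suc.IH Suc.prems by simp
  show ?case using homotopy_eqv_trans[OF IH A] unfolding B .
qed


definition D3 :: "nat \<Rightarrow> nat \<Rightarrow> nat \<Rightarrow> (nat \<times> nat) set set" where
  "D3 n k m = D2 n k \<union> vE ` {2 * i + 1 | i. i < m}"

lemma D3_T: "Suc j < n \<Longrightarrow> tE j \<in> D3 n k m" by (auto simp: D3_def D2_def)

lemma D3_v: "vE (2 * c) \<notin> D3 n k m" by (auto simp: D3_def D2_def) presburger

lemma phase3:
  assumes n: "n = 2 * k + 2"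
  shows "m \<le> k + 1 \<Longrightarrow> GK n (KD n (D3 n k 0)) homotopy_equivalent_space GK n (KD n (D3 n k m))"
proof (induction m)
  case 0
  then show ?case by (simp add: homotopy_equivalent_space_refl)
next
  case (Suc m)
  have lt: "2 * m + 1 < n" "m \<le> k" using Suc.prems n by auto
  have A: "GK n (KD n (D3 n k m)) homotopy_equivalent_space GK n {\<sigma> \<in> KD n (D3 n k m). vE (2*m+1) \<notin> \<sigma>}"
  proof (rule gr_delete[where a = "vE (2*m)"])
    show "finite (grid_edges n)" by (rule fin_edges)
    show "vE (2*m) \<in> grid_edges n" "vE (2*m+1) \<in> grid_edges n" using lt by (auto simp: edge_valid)
    show "vE (2*m) \<noteq> vE (2*m+1)" by simp
    show "\<And>\<sigma> \<tau>. \<sigma> \<in> KD n (D3 n k m) \<Longrightarrow> \<tau> \<subseteq> \<sigma> \<Longrightarrow> \<tau> \<in> KD n (D3 n k m)" by (rule KD_down)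
    fix \<sigma> assume s: "\<sigma> \<in> KD n (D3 n k m)" "vE (2*m+1) \<in> \<sigma>"
    have pd: "pdisj \<sigma>" and sD: "\<sigma> \<inter> D3 n k m = {}" using s(1) by (auto simp: KD_def dest: K_imp)
    show "insert (vE (2*m)) \<sigma> \<in> KD n (D3 n k m)"
    proof (rule insert_v[OF s(1) D3_T D3_v])
      show "2 * m < n" using lt by simp
      show "bE (2 * m) \<notin> \<sigma>" using pdisjD[OF pd _ s(2), of "bE (2*m)" "(1, 2*m+1)"] by auto
      assume "2 * m > 0"
      then have "bE (2 * m - 1) \<in> D3 n k m" unfolding D3_def D2_def using lt
        by (intro UnI1 UnI2 imageI) (auto intro!: exI[of _ "m - 1"])
      then show "bE (2 * m - 1) \<notin> \<sigma>" using sD by auto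
    qed
  qed
  have B: "{\<sigma> \<in> KD n (D3 n k m). vE (2*m+1) \<notin> \<sigma>} = KD n (D3 n k (Suc m))"
  proof -
    have "D3 n k (Suc m) = insert (vE (2*m+1)) (D3 n k m)"
      unfolding D3_def by (auto simp: less_Suc_eq)
    then show ?thesis by (simp add: KD_del)
  qed
  have IH: "GK n (KD n (D3 n k 0)) homotopy_equivalent_space GK n (KD n (D3 n k m))" using Suc.IH Suc.prems by simp
  show ?case using homotopy_eqv_trans[OF IH A] unfolding B .
qed

lemma odd_final:
  assumes n: "n = 2 * q + 1"
  shows "contractible_space (GK n (KD n (D2 n q)))"
proof (rule gr_cone[where c = "vE (2*q)"])
  show "finite (grid_edges n)" by (rule fin_edges)
  show "vE (2*q) \<in> grid_edges n" using n by (simp add: edge_valid)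
  show "\<And>\<sigma> \<tau>. \<sigma> \<in> KD n (D2 n q) \<Longrightarrow> \<tau> \<subseteq> \<sigma> \<Longrightarrow> \<tau> \<in> KD n (D2 n q)" by (rule KD_down)
  fix \<sigma> assume s: "\<sigma> \<in> KD n (D2 n q)"
  have sub: "\<sigma> \<subseteq> grid_edges n" and sD: "\<sigma> \<inter> D2 n q = {}" using s by (auto simp: KD_def dest: K_imp)
  show "insert (vE (2*q)) \<sigma> \<in> KD n (D2 n q)"
  proof (rule insert_v[OF s D2_T D2_v])
    show "2 * q < n" using n by simp
    show "bE (2 * q) \<notin> \<sigma>" using sub n by (auto simp: edge_valid)
    assume "2 * q > 0"
    then have "bE (2 * q - 1) \<in> D2 n q" unfolding D2_def
      by (intro UnI2 imageI) (auto intro!: exI[of _ "q - 1"])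
    then show "bE (2 * q - 1) \<notin> \<sigma>" using sD by auto
  qed
qed


lemma D3_b: "bE (2 * c) \<notin> D3 n k m" by (auto simp: D3_def D2_def) presburger

lemma D3_vodd: "i < m \<Longrightarrow> vE (2 * i + 1) \<in> D3 n k m" by (auto simp: D3_def)
lemma D3_bodd: "i < k \<Longrightarrow> bE (2 * i + 1) \<in> D3 n k m" by (auto simp: D3_def D2_def)

lemma even_final:
  assumes n: "n = 2 * k + 2"
  shows "GK n (KD n (D3 n k (k + 1))) homeomorphic_space nsphere k"
proof -
  interpret X: crossdata "grid_edges n" "\<lambda>i. vE (2 * i)" "\<lambda>i. bE (2 * i)" k
  proof
    show "finite (grid_edges n)" by (rule fin_edges)
    show "(\<lambda>i. vE (2 * i)) ` {..k} \<subseteq> grid_edges n" using n by (auto simp: edge_valid)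
    show "(\<lambda>i. bE (2 * i)) ` {..k} \<subseteq> grid_edges n" using n by (auto simp: edge_valid)
    show "inj_on (\<lambda>i. vE (2 * i)) {..k}" by (auto intro: inj_onI)
    show "inj_on (\<lambda>i. bE (2 * i)) {..k}" by (auto intro: inj_onI)
    show "(\<lambda>i. vE (2 * i)) ` {..k} \<inter> (\<lambda>i. bE (2 * i)) ` {..k} = {}" by auto
  qed
  have eq: "KD n (D3 n k (k + 1)) = X.CL"
  proof (rule set_eqI)
    fix \<sigma>
    let ?P = "(\<lambda>i. vE (2 * i)) ` {..k} \<union> (\<lambda>i. bE (2 * i)) ` {..k}"
    have L: "\<sigma> \<in> KD n (D3 n k (k + 1)) \<longleftrightarrow> \<sigma> \<subseteq> grid_edges n \<and> pdisj \<sigma> \<and> \<sigma> \<inter> D3 n k (k + 1) = {}"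
      by (rule KD_char[OF D3_T])
    have R: "\<sigma> \<in> X.CL \<longleftrightarrow> \<sigma> \<subseteq> ?P \<and> (\<forall>i\<le>k. \<not> (vE (2 * i) \<in> \<sigma> \<and> bE (2 * i) \<in> \<sigma>))"
      by (simp add: X.CL_def)
    show "\<sigma> \<in> KD n (D3 n k (k + 1)) \<longleftrightarrow> \<sigma> \<in> X.CL"
      unfolding L R
    proof
      assume h: "\<sigma> \<subseteq> grid_edges n \<and> pdisj \<sigma> \<and> \<sigma> \<inter> D3 n k (k + 1) = {}"
      have "e \<in> ?P" if e: "e \<in> \<sigma>" for e
      proof -
        have eE: "e \<in> grid_edges n" and eD: "e \<notin> D3 n k (k + 1)" using h e by auto
        then consider (v) j where "j < n" "e = vE j" | (t) j where "Suc j < n" "e = tE j"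
          | (b) j where "Suc j < n" "e = bE j" unfolding edge_cases by blast
        then show ?thesis
        proof cases
          case v
          show ?thesis
          proof (cases "even j")
            case True
            then obtain i where "j = 2 * i" by (auto elim: evenE)
            then show ?thesis using v n by auto
          next
            case False
            then obtain i where "j = 2 * i + 1" by (auto elim: oddE)
            then show ?thesis using v n eD D3_vodd[of i "k+1" n k] by auto
          qed
        next
          case t then show ?thesis using eD D3_T by auto
        next
          case b
          show ?thesis
          proof (cases "even j")
            case True
            then obtain i where "j = 2 * i" by (auto elim: evenE)
            then show ?thesis using b n by auto
          next
            case False
            then obtain i where "j = 2 * i + 1" by (auto elim: oddE)
            then show ?thesis using b n eD D3_bodd[of i k n "k+1"] by auto
          qed
        qed
      qed
      moreover have "\<not> (vE (2 * i) \<in> \<sigma> \<and> bE (2 * i) \<in> \<sigma>)" for i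
        using h pdisjD[of \<sigma> "vE (2*i)" "bE (2*i)" "(1, 2*i)"] by auto
      ultimately show "\<sigma> \<subseteq> ?P \<and> (\<forall>i\<le>k. \<not> (vE (2 * i) \<in> \<sigma> \<and> bE (2 * i) \<in> \<sigma>))" by blast
    next
      assume h: "\<sigma> \<subseteq> ?P \<and> (\<forall>i\<le>k. \<not> (vE (2 * i) \<in> \<sigma> \<and> bE (2 * i) \<in> \<sigma>))"
      have "?P \<subseteq> grid_edges n" using n by (auto simp: edge_valid)
      moreover have "pdisj \<sigma>" unfolding pdisj_def
      proof (intro ballI impI)
        fix e e' assume e: "e \<in> \<sigma>" "e' \<in> \<sigma>" "e \<noteq> e'"
        show "e \<inter> e' = {}"
        proof (rule ccontr)
          assume "e \<inter> e' \<noteq> {}"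
          then obtain x where x: "x \<in> e" "x \<in> e'" by blast
          from e h obtain i j where i: "i \<le> k" "e = vE (2*i) \<or> e = bE (2*i)"
            and j: "j \<le> k" "e' = vE (2*j) \<or> e' = bE (2*j)" by blast
          have "i = j" using i(2) j(2) x by auto
          then show False using i j e h by auto
        qed
      qed
      moreover have "\<sigma> \<inter> D3 n k (k + 1) = {}" using h D3_v D3_b by blast
      ultimately show "\<sigma> \<subseteq> grid_edges n \<and> pdisj \<sigma> \<and> \<sigma> \<inter> D3 n k (k + 1) = {}" using h by blast
    qed
  qed
  show ?thesis unfolding eq by (rule X.cross_homeo)
qed

theorem theorem3p1:
  fixes n :: nat
  assumes "n \<ge> 1"
  shows "(odd n \<longrightarrow> contractible_space (grid_pm_complex_space n)) \<and>
         (\<forall>k. n = 2 * k + 2 \<longrightarrow>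
              grid_pm_complex_space n homotopy_equivalent_space nsphere k)"
proof -
  have sp: "grid_pm_complex_space n = GK n (Kn n)" by (simp add: grid_pm_complex_space_def)
  have P1: "GK n (Kn n) homotopy_equivalent_space GK n (KD n (D2 n 0))"
    using phase1[of "n - 1" n] assms by (simp add: D2_def)
  show ?thesis
  proof (intro conjI impI allI)
    assume "odd n"
    then obtain q where n: "n = 2 * q + 1" by (auto elim: oddE)
    have "GK n (Kn n) homotopy_equivalent_space GK n (KD n (D2 n q))"
      using homotopy_eqv_trans[OF P1 phase2[of q n]] n by simp
    then show "contractible_space (grid_pm_complex_space n)"
      unfolding sp using homotopy_equivalent_space_contractibility odd_final[OF n] by blast
  next
    fix k assume n: "n = 2 * k + 2"
    have "GK n (Kn n) homotopy_equivalent_space GK n (KD n (D2 n k))"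
      using homotopy_eqv_trans[OF P1 phase2[of k n]] n by simp
    moreover have "D2 n k = D3 n k 0" by (simp add: D3_def)
    ultimately have "GK n (Kn n) homotopy_equivalent_space GK n (KD n (D3 n k (k+1)))"
      using homotopy_eqv_trans phase3[OF n, of "k+1"] by auto
    then show "grid_pm_complex_space n homotopy_equivalent_space nsphere k"
      unfolding sp using homotopy_eqv_trans homeomorphic_imp_homotopy_equivalent_space[OF even_final[OF n]] by blast
  qed
qed


end
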